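(* Let $a, b \in \mathbb Z_g$ and let $1 \leq i < j \leq k$. If $\vec \theta \in \Lambda$, then \[ \theta_{\{i, j\}, a} + \theta_{\{i, j\}, b} \equiv \theta_{\{i, j\}, a + b} \pmod{2 \pi}, \] where the undefined value $\theta_{\{i,j\},0}$ is understood to be $0$.
   Context: Let $g\ge 2$, $k\ge 2$ be integers, $\mathbb Z_g$ the integers mod $g$, and $d=\binom{k}{2}(g-1)$. Index the coordinates of $\mathbb R^d$ by pairs $(\{i,j\},a)$ with $1\le i<j\le k$ and $a\in\mathbb Z_g\setminus\{0\}$. Define $Z:(\mathbb Z_g)^k\to\mathbb R^d$ by $[Z(\vec x)]_{\{i,j\},a}=1-1/g$ if $x_i-x_j=a$ and $-1/g$ otherwise. Define $\Phi:\mathbb R^d\to\mathbb C$ by $\Phi(\vec\theta)=\sum_{\vec x\in(\mathbb Z_g)^k} g^{-k}e^{i\vec\theta\cdot Z(\vec x)}$, and $\Lambda=\{\vec\theta\in\mathbb R^d: |\Phi(\vec\theta)|=1\}$. *)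

theory Defs
  imports "HOL-Analysis.Analysis" "HOL-Library.FuncSet"
begin

text \<open>Elements of Z_g are represented by integers in {0..<g}.
  Coordinates of R^d are triples (i, j, a) with 1 <= i < j <= k and a in Z_g minus 0;
  a vector of R^d is a function on these triples (values elsewhere are irrelevant).\<close>

definition coords :: "nat \<Rightarrow> nat \<Rightarrow> (nat \<times> nat \<times> int) set" where
  "coords g k = {(i, j, a). 1 \<le> i \<and> i < j \<and> j \<le> k \<and> a \<in> {1..<int g}}"

definition configs :: "nat \<Rightarrow> nat \<Rightarrow> (nat \<Rightarrow> int) set" where
  "configs g k = {1..k} \<rightarrow>\<^sub>E {0..<int g}"

definition Zvec :: "nat \<Rightarrow> (nat \<Rightarrow> int) \<Rightarrow> (nat \<times> nat \<times> int) \<Rightarrow> real" where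
  "Zvec g x = (\<lambda>(i, j, a). if (x i - x j) mod int g = a then 1 - 1 / real g else - 1 / real g)"

definition Phi :: "nat \<Rightarrow> nat \<Rightarrow> (nat \<times> nat \<times> int \<Rightarrow> real) \<Rightarrow> complex" where
  "Phi g k \<theta> = (\<Sum>x\<in>configs g k. (1 / of_nat g ^ k) *
      cis (\<Sum>p\<in>coords g k. \<theta> p * Zvec g x p))"

definition Lambda :: "nat \<Rightarrow> nat \<Rightarrow> (nat \<times> nat \<times> int \<Rightarrow> real) set" where
  "Lambda g k = {\<theta>. cmod (Phi g k \<theta>) = 1}"

definition theta_ext :: "nat \<Rightarrow> (nat \<times> nat \<times> int \<Rightarrow> real) \<Rightarrow> nat \<Rightarrow> nat \<Rightarrow> int \<Rightarrow> real" where
  "theta_ext g \<theta> i j a = (if a mod int g = 0 then 0 else \<theta> (i, j, a mod int g))"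

end

theory Submission
  imports Defs
begin

lemma cis_eq_imp: "cis s = cis t \<Longrightarrow> \<exists>m::int. s - t = 2 * pi * of_int m"
proof -
  assume h: "cis s = cis t"
  have "cis (s - t) = 1" using h by (simp add: cis_divide[symmetric])
  then have "cos (s - t) = 1" by (metis Re_complex_of_real cis.sel(1) one_complex.sel(1))
  then obtain n :: int where "s - t = of_int n * 2 * pi" by (auto simp only: cos_one_2pi_int)
  then show ?thesis by (intro exI[of _ n]) (simp add: algebra_simps)
qed

lemma unit_avg:
  fixes f :: "'a \<Rightarrow> real"
  assumes fin: "finite S" and n: "card S = n" and np: "n > 0"
    and one: "cmod (\<Sum>x\<in>S. (1 / of_nat n) * cis (f x)) = 1" and x: "x \<in> S"
  shows "cis (f x) = (\<Sum>x\<in>S. (1 / of_nat n) * cis (f x))"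
proof -
  define s where "s = (\<Sum>x\<in>S. (1 / of_nat n) * cis (f x))"
  have ss: "cnj s * s = 1"
    using one unfolding s_def by (metis complex_norm_square mult.commute of_real_1 power_one)
  have "1 = Re (cnj s * s)" using ss by simp
  also have "\<dots> = (\<Sum>y\<in>S. (1 / real n) * Re (cnj s * cis (f y)))"
    unfolding s_def sum_distrib_left by (simp add: Re_sum mult.left_commute)
  finally have eq1: "(\<Sum>y\<in>S. (1 / real n) * Re (cnj s * cis (f y))) = 1" by simp
  have le: "Re (cnj s * cis (f y)) \<le> 1" for y
  proof -
    have "Re (cnj s * cis (f y)) \<le> cmod (cnj s * cis (f y))" by (rule complex_Re_le_cmod)
    also have "\<dots> = 1" using one unfolding s_def[symmetric] by (simp add: norm_mult)
    finally show ?thesis .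
  qed
  have "(\<Sum>y\<in>S. (1 / real n) * (1 - Re (cnj s * cis (f y)))) = 0"
    using eq1 n np by (simp add: sum_subtractf right_diff_distrib sum_distrib_left[symmetric])
  then have "\<forall>y\<in>S. (1 / real n) * (1 - Re (cnj s * cis (f y))) = 0"
    using fin le np by (subst sum_nonneg_eq_0_iff[symmetric]) auto
  then have re1: "Re (cnj s * cis (f x)) = 1" using x np by simp
  define z where "z = cnj s * cis (f x)"
  have nz: "cmod z = 1" using one unfolding z_def s_def[symmetric] by (simp add: norm_mult)
  have "(Re z)^2 + (Im z)^2 = 1" using nz by (metis cmod_power2 power_one)
  then have "Im z = 0" using re1 z_def by simp
  then have "z = 1" using re1 z_def by (simp add: complex_eq_iff)
  then have "s * z = s" by simp
  then have "cis (f x) = s" unfolding z_def using ss by (metis mult.assoc mult.commute mult_1)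
  then show ?thesis unfolding s_def .
qed

lemma termwise:
  fixes g k i j l m :: nat and a b c nb :: int and X :: "int \<Rightarrow> int \<Rightarrow> nat \<Rightarrow> int"
  assumes ij: "i < j" and lm: "l < m" and c0: "c \<noteq> 0"
    and X: "X = (\<lambda>u v. (\<lambda>l::nat. if l \<in> {1..k} then (if l = i then u else if l = j then v else 0) else undefined))"
    and l: "l \<in> {1..k}" and m: "m \<in> {1..k}"
    and e1: "(0 - nb) mod int g = b" and e2: "(a - nb) mod int g = (a + b) mod int g"
    and e3: "(a - 0) mod int g = a" and e5: "(0 - 0) mod int g = 0"
  shows "Zvec g (X a 0) (l,m,c) + Zvec g (X 0 nb) (l,m,c)
       - Zvec g (X a nb) (l,m,c) - Zvec g (X 0 0) (l,m,c)
       = (if l = i \<and> m = j then of_bool (c = a) + of_bool (c = b) - of_bool (c = (a + b) mod int g) else 0)"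
proof -
  have Zv: "Zvec g x (l,m,c) = (if (x l - x m) mod int g = c then 1 - 1 / real g else - 1 / real g)" for x
    unfolding Zvec_def by simp
  have Xi: "X u v i = u" if "i \<in> {1..k}" for u v using that unfolding X by simp
  have Xj: "X u v j = v" if "j \<in> {1..k}" for u v using that ij unfolding X by simp
  have Xo: "X u v n = 0" if "n \<in> {1..k}" "n \<noteq> i" "n \<noteq> j" for u v n using that unfolding X by simp
  consider "l = i \<and> m = j" | "l = i \<and> m \<noteq> j" | "l = j" | "l \<noteq> i \<and> l \<noteq> j \<and> m = i"
    | "l \<noteq> i \<and> l \<noteq> j \<and> m = j" | "l \<noteq> i \<and> l \<noteq> j \<and> m \<noteq> i \<and> m \<noteq> j" by blast
  then show ?thesis
  proof cases
    case 1
    have h1: "\<And>u v. X u v l = u" using 1 l Xi by simp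
    have h2: "\<And>u v. X u v m = v" using 1 m Xj by simp
    show ?thesis unfolding Zv h1 h2 e1 e2 e3 e5 using 1 c0 by simp
  next
    case 2
    then have "m \<noteq> i" using lm by simp
    then have h2: "\<And>u v. X u v m = 0" using 2 m by (intro Xo) auto
    have h1: "\<And>u v. X u v l = u" using 2 l Xi by simp
    show ?thesis unfolding Zv h1 h2 using 2 c0 by simp
  next
    case 3
    then have "m \<noteq> i" "m \<noteq> j" using lm ij by auto
    then have h2: "\<And>u v. X u v m = 0" using m by (intro Xo) auto
    have h1: "\<And>u v. X u v l = v" using 3 l Xj by simp
    have ne: "l \<noteq> i" using 3 ij by simp
    show ?thesis unfolding Zv h1 h2 using ne c0 by simp
  next
    case 4
    have h1: "\<And>u v. X u v l = 0" using 4 l by (intro Xo) auto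
    have h2: "\<And>u v. X u v m = u" using 4 m Xi by simp
    show ?thesis unfolding Zv h1 h2 using 4 c0 by simp
  next
    case 5
    have h1: "\<And>u v. X u v l = 0" using 5 l by (intro Xo) auto
    have h2: "\<And>u v. X u v m = v" using 5 m Xj by simp
    show ?thesis unfolding Zv h1 h2 using 5 c0 by simp
  next
    case 6
    have h1: "\<And>u v. X u v l = 0" using 6 l by (intro Xo) auto
    have h2: "\<And>u v. X u v m = 0" using 6 m by (intro Xo) auto
    show ?thesis unfolding Zv h1 h2 using 6 c0 by simp
  qed
qed

lemma sum_pair:
  fixes G :: "int \<Rightarrow> real"
  assumes "1 \<le> i" "i < j" "j \<le> k"
  shows "(\<Sum>p\<in>coords g k. (case p of (l, m, c) \<Rightarrow> if l = i \<and> m = j then G c else 0))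
       = (\<Sum>c\<in>{1..<int g}. G c)"
proof -
  have fin: "finite (coords g k)"
  proof -
    have "coords g k \<subseteq> {1..k} \<times> {1..k} \<times> {1..<int g}" unfolding coords_def by auto
    then show ?thesis by (rule finite_subset) auto
  qed
  have "(\<Sum>p\<in>coords g k. (case p of (l, m, c) \<Rightarrow> if l = i \<and> m = j then G c else 0))
      = (\<Sum>p\<in>coords g k. if fst p = i \<and> fst (snd p) = j then G (snd (snd p)) else 0)"
    by (rule sum.cong) (auto split: prod.splits)
  also have "\<dots> = (\<Sum>p\<in>{p\<in>coords g k. fst p = i \<and> fst (snd p) = j}. G (snd (snd p)))"
    using fin by (rule sum.inter_filter[symmetric])
  also have "{p\<in>coords g k. fst p = i \<and> fst (snd p) = j} = (\<lambda>c. (i, j, c)) ` {1..<int g}"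
    using assms unfolding coords_def by auto
  also have "(\<Sum>p\<in>(\<lambda>c. (i, j, c)) ` {1..<int g}. G (snd (snd p))) = (\<Sum>c\<in>{1..<int g}. G c)"
    by (subst sum.reindex) (auto simp: inj_on_def)
  finally show ?thesis .
qed

theorem corollary2p3:
  fixes g k i j :: nat and a b :: int and \<theta> :: "nat \<times> nat \<times> int \<Rightarrow> real"
  assumes "g \<ge> 2" and "k \<ge> 2"
    and "a \<in> {0..<int g}" and "b \<in> {0..<int g}"
    and "1 \<le> i" and "i < j" and "j \<le> k"
    and "\<theta> \<in> Lambda g k"
  shows "\<exists>m::int. theta_ext g \<theta> i j a + theta_ext g \<theta> i j b - theta_ext g \<theta> i j (a + b)
           = 2 * pi * of_int m"
proof -
  note g = assms(1) and a = assms(3) and b = assms(4) and ij = assms(6)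
  define X :: "int \<Rightarrow> int \<Rightarrow> nat \<Rightarrow> int" where "X = (\<lambda>u v. (\<lambda>l::nat. if l \<in> {1..k} then (if l = i then u else if l = j then v else 0) else undefined))"
  define F where "F = (\<lambda>x. \<Sum>p\<in>coords g k. \<theta> p * Zvec g x p)"
  define nb where "nb = (-b) mod int g"
  have gp: "int g > 0" using g by simp
  have nbr: "nb \<in> {0..<int g}" unfolding nb_def using gp by simp
  have Xc: "X u v \<in> configs g k" if "u \<in> {0..<int g}" "v \<in> {0..<int g}" for u v
    using that gp unfolding X_def configs_def by (auto simp: PiE_def extensional_def)
  have finC: "finite (configs g k)" unfolding configs_def by (auto intro!: finite_PiE)
  have cardC: "card (configs g k) = g ^ k" unfolding configs_def by (simp add: card_PiE)
  have L: "cmod (\<Sum>x\<in>configs g k. (1 / of_nat (g ^ k)) * cis (F x)) = 1"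
    using assms(8) unfolding Lambda_def Phi_def F_def by simp
  have cisF: "cis (F x) = (\<Sum>x\<in>configs g k. (1 / of_nat (g ^ k)) * cis (F x))" if "x \<in> configs g k" for x
    by (rule unit_avg[OF finC cardC _ L that]) (use g in simp)
  have e1: "(0 - nb) mod int g = b"
  proof -
    have "(0 - (-b) mod int g) mod int g = (0 - (-b)) mod int g" by (rule mod_diff_right_eq)
    also have "\<dots> = b mod int g" by (simp only: diff_0 minus_minus)
    also have "\<dots> = b" using b by (intro mod_pos_pos_trivial) auto
    finally show ?thesis unfolding nb_def .
  qed
  have e2: "(a - nb) mod int g = (a + b) mod int g"
  proof -
    have "(a - (-b) mod int g) mod int g = (a - (-b)) mod int g" by (rule mod_diff_right_eq)
    then show ?thesis unfolding nb_def by (simp only: diff_minus_eq_add)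
  qed
  have e3: "(a - 0) mod int g = a" using a by (simp only: diff_0_right) (intro mod_pos_pos_trivial, auto)
  have e5: "(0 - 0) mod int g = (0::int)" by simp
  have z0: "(0::int) \<in> {0..<int g}" using gp by simp
  obtain m1 where m1: "F (X a 0) - F (X a nb) = 2 * pi * of_int m1"
    using cis_eq_imp[of "F (X a 0)" "F (X a nb)"] cisF Xc a z0 nbr by metis
  obtain m2 where m2: "F (X 0 nb) - F (X 0 0) = 2 * pi * of_int m2"
    using cis_eq_imp[of "F (X 0 nb)" "F (X 0 0)"] cisF Xc a z0 nbr by metis
  define G where "G = (\<lambda>c. (if c = a then \<theta> (i, j, c) else 0) + (if c = b then \<theta> (i, j, c) else 0) - (if c = (a + b) mod int g then \<theta> (i, j, c) else 0))"
  have "F (X a 0) + F (X 0 nb) - F (X a nb) - F (X 0 0)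
      = (\<Sum>p\<in>coords g k. \<theta> p * (Zvec g (X a 0) p + Zvec g (X 0 nb) p - Zvec g (X a nb) p - Zvec g (X 0 0) p))"
    unfolding F_def by (simp only: distrib_left right_diff_distrib sum.distrib sum_subtractf)
  also have "\<dots> = (\<Sum>p\<in>coords g k. (case p of (l, m, c) \<Rightarrow> if l = i \<and> m = j then G c else 0))"
  proof (rule sum.cong[OF refl])
    fix p assume p: "p \<in> coords g k"
    obtain l m c where pe: "p = (l, m, c)" by (cases p) auto
    have lm: "l < m" "l \<in> {1..k}" "m \<in> {1..k}" "c \<in> {1..<int g}" using p pe unfolding coords_def by auto
    have c0: "c \<noteq> 0" using lm(4) by simp
    show "\<theta> p * (Zvec g (X a 0) p + Zvec g (X 0 nb) p - Zvec g (X a nb) p - Zvec g (X 0 0) p)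
        = (case p of (l, m, c) \<Rightarrow> if l = i \<and> m = j then G c else 0)"
      using termwise[OF ij lm(1) c0 X_def lm(2) lm(3) e1 e2 e3 e5] unfolding pe G_def
      by (simp add: of_bool_def)
  qed
  also have "\<dots> = (\<Sum>c\<in>{1..<int g}. G c)" by (rule sum_pair[OF assms(5-7)])
  also have "\<dots> = theta_ext g \<theta> i j a + theta_ext g \<theta> i j b - theta_ext g \<theta> i j (a + b)"
  proof -
    have "(\<Sum>c\<in>{1..<int g}. G c) = (\<Sum>c\<in>{1..<int g}. if c = a then \<theta> (i,j,c) else 0)
       + (\<Sum>c\<in>{1..<int g}. if c = b then \<theta> (i,j,c) else 0)
       - (\<Sum>c\<in>{1..<int g}. if c = (a + b) mod int g then \<theta> (i,j,c) else 0)"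
      unfolding G_def by (simp only: sum.distrib sum_subtractf)
    also have "\<dots> = theta_ext g \<theta> i j a + theta_ext g \<theta> i j b - theta_ext g \<theta> i j (a + b)"
    proof -
      have "0 \<le> (a + b) mod int g" using gp by simp
      have r: "(a + b) mod int g \<in> {0..<int g}" using gp by simp
      have ab: "(a + b) mod int g mod int g = (a + b) mod int g" by simp
      have am: "a mod int g = a" "b mod int g = b" using a b by auto
      have gen: "(\<Sum>c\<in>{1..<int g}. if c = q then \<theta> (i,j,c) else 0)
          = (if q mod int g = 0 then 0 else \<theta> (i, j, q mod int g))" if "q \<in> {0..<int g}" "q mod int g = q" for q
        using that by (auto simp add: sum.delta')
      show ?thesis unfolding theta_ext_def using gen[OF a am(1)] gen[OF b am(2)] gen[OF r ab] am ab by simp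
    qed
    finally show ?thesis .
  qed
  finally have "theta_ext g \<theta> i j a + theta_ext g \<theta> i j b - theta_ext g \<theta> i j (a + b)
      = 2 * pi * of_int (m1 + m2)" using m1 m2 by (simp add: algebra_simps)
  then show ?thesis by blast
qed

end
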